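(* Assume the balanced case $\beta_0=C$, $A>0$ and $B^2=4AC$, and let $r=-B/(2A)$, so $Ax^2+Bx+C=A(x-r)^2$. Then \[ w(x,t)=\exp\bigl[(\alpha_0r+\gamma_0)t\bigr]\bigl(1-At(x-r)\bigr)^{-\alpha_0/A} \] whenever $1-At(x-r)\neq0$ (principal branch, as an identity of analytic functions near $t=0$).
   Context: Fix nonnegative integers $a,b,c,\alpha_0,\beta_0,\gamma_0$, $\alpha_k=ak+\alpha_0$, $\beta_k=bk+\beta_0$, $\gamma_k=ck+\gamma_0$; $w_{0,0}=1$, $w_{n,k}=0$ for $k<0$ or $k>n$, $w_{n+1,k}=\alpha_{k-1}w_{n,k-1}+\gamma_k w_{n,k}+\beta_k w_{n,k+1}$. $A=a$, $B=c$, $C=b$; balanced means $\beta_0=C$. $P_n(x)=\sum_k w_{n,k}x^k$, $w(x,t)=\sum_{n\ge0}P_n(x)t^n/n!$. *)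

theory Defs
  imports "HOL-Analysis.Analysis"
begin

fun wnk :: "nat \<Rightarrow> nat \<Rightarrow> nat \<Rightarrow> nat \<Rightarrow> nat \<Rightarrow> nat \<Rightarrow> nat \<Rightarrow> int \<Rightarrow> int" where
  "wnk a b c al0 be0 ga0 0 k = (if k = 0 then 1 else 0)"
| "wnk a b c al0 be0 ga0 (Suc n) k =
     (if k < 0 \<or> k > int (Suc n) then 0
      else (int a * (k - 1) + int al0) * wnk a b c al0 be0 ga0 n (k - 1)
         + (int c * k + int ga0) * wnk a b c al0 be0 ga0 n k
         + (int b * k + int be0) * wnk a b c al0 be0 ga0 n (k + 1))"

definition Ppoly :: "nat \<Rightarrow> nat \<Rightarrow> nat \<Rightarrow> nat \<Rightarrow> nat \<Rightarrow> nat \<Rightarrow> nat \<Rightarrow> complex \<Rightarrow> complex" where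
  "Ppoly a b c al0 be0 ga0 n x = (\<Sum>k\<le>n. of_int (wnk a b c al0 be0 ga0 n (int k)) * x ^ k)"

end

theory Submission
  imports Defs "HOL-Computational_Algebra.Polynomial"
begin

lemma coeff_op0:
  fixes p :: "complex poly"
  shows "coeff ([:b0,b1,b2:] * pderiv p + [:g0,g1:] * p) 0 = b0 * coeff p 1 + g0 * coeff p 0"
  by (simp add: coeff_pderiv)

lemma coeff_opS:
  fixes p :: "complex poly"
  shows "coeff ([:b0,b1,b2:] * pderiv p + [:g0,g1:] * p) (Suc k) =
     b2 * of_nat k * coeff p k + b1 * of_nat (Suc k) * coeff p (Suc k)
     + b0 * of_nat (Suc (Suc k)) * coeff p (Suc (Suc k)) + g1 * coeff p k + g0 * coeff p (Suc k)"
  by (cases k) (simp_all add: coeff_pderiv algebra_simps)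

lemma pderiv_lin: "pderiv [:u, 1::complex:] = 1"
  by (simp add: pderiv_pCons)


lemma wnk_zero: "k < 0 \<or> k > int n \<Longrightarrow> wnk a b c al0 be0 ga0 n k = 0"
  by (cases n) auto

fun pw :: "nat\<Rightarrow>nat\<Rightarrow>nat\<Rightarrow>nat\<Rightarrow>nat\<Rightarrow>nat\<Rightarrow>complex poly" where
  "pw a b c al ga 0 = 1"
| "pw a b c al ga (Suc n) = [:of_nat b, of_nat c, of_nat a:] * pderiv (pw a b c al ga n)
      + [:of_nat ga, of_nat al:] * pw a b c al ga n"

lemma coeff_pw: "coeff (pw a b c al ga n) k = of_int (wnk a b c al b ga n (int k))"
proof (induction n arbitrary: k)
  case 0
  then show ?case by (simp add: coeff_1)
next
  case (Suc n)
  show ?case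
  proof (cases k)
    case 0
    have e: "int 0 + 1 = int 1" by simp
    show ?thesis using Suc.IH \<open>k = 0\<close>
      apply (simp only: pw.simps coeff_op0 wnk.simps e)
      apply (simp add: wnk_zero)
      done
  next
    case (Suc j)
    show ?thesis
    proof (cases "j > n")
      case True
      then show ?thesis using Suc.IH \<open>k = Suc j\<close>
        apply (simp only: pw.simps coeff_opS)
        apply (simp add: wnk_zero)
        done
    next
      case False
      have e1: "int (Suc j) - 1 = int j" by simp
      have e2: "int (Suc j) + 1 = int (Suc (Suc j))" by simp
      show ?thesis using Suc.IH \<open>k = Suc j\<close> False
        apply (simp only: pw.simps coeff_opS wnk.simps e1 e2)
        apply (simp add: algebra_simps)
        done
    qed
  qed
qed


fun pc :: "nat \<Rightarrow> nat \<Rightarrow> complex \<Rightarrow> nat \<Rightarrow> complex poly" where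
  "pc a al lam 0 = 1"
| "pc a al lam (Suc n) = [:0, 0, of_nat a:] * pderiv (pc a al lam n) + [:lam, of_nat al:] * pc a al lam n"

definition qq :: "nat \<Rightarrow> nat \<Rightarrow> nat \<Rightarrow> complex" where
  "qq a al m = pochhammer (of_nat al / of_nat a) m * of_nat a ^ m"

lemma qq_Suc: "a > 0 \<Longrightarrow> qq a al (Suc m) = qq a al m * (of_nat a * of_nat m + of_nat al)"
  unfolding qq_def by (simp add: pochhammer_Suc field_simps)

lemma coeff_pc: assumes "a > 0"
  shows "coeff (pc a al lam n) m = of_nat (n choose m) * lam ^ (n - m) * qq a al m"
proof (induction n arbitrary: m)
  case 0
  then show ?case by (simp add: coeff_1 qq_def)
next
  case (Suc n)
  show ?case
  proof (cases m)
    case 0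
    then show ?thesis using Suc.IH
      by (simp only: pc.simps coeff_op0) (simp add: qq_def)
  next
    case (Suc j)
    have A: "coeff (pc a al lam (Suc n)) m = (of_nat a * of_nat j + of_nat al) * coeff (pc a al lam n) j
       + lam * coeff (pc a al lam n) (Suc j)"
      unfolding \<open>m = Suc j\<close> pc.simps coeff_opS by (simp add: algebra_simps)
    show ?thesis
    proof (cases "j < n")
      case True
      then obtain d where d: "n = Suc (j + d)" by (metis less_imp_Suc_add)
      have p: "lam ^ (n - j) = lam * lam ^ (n - Suc j)" using d by (simp add: Suc_diff_le)
      show ?thesis unfolding A unfolding Suc.IH \<open>m = Suc j\<close> qq_Suc[OF assms] p
        by (simp add: algebra_simps p)
    next
      case False
      then show ?thesis unfolding A unfolding Suc.IH \<open>m = Suc j\<close> qq_Suc[OF assms]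
        by (simp add: binomial_eq_0)
    qed
  qed
qed

lemma pw_pc:
  assumes Apos: "a > 0" and disc: "c ^ 2 = 4 * a * b"
    and r: "r = - of_nat c / (2 * of_nat a)" and lam: "lam = of_nat al * r + of_nat ga"
  shows "pw a b c al ga n = pcompose (pc a al lam n) [:-r, 1:]"
proof (induction n)
  case 0
  then show ?case by (simp add: one_pCons)
next
  case (Suc n)
  have d: "of_nat c ^ 2 = (4 * of_nat a * of_nat b :: complex)"
    using disc by (metis of_nat_mult of_nat_numeral of_nat_power)
  have h1: "pcompose [:0, 0, of_nat a:] [:-r, 1:] = [:of_nat b, of_nat c, of_nat a:]"
  proof -
    have "poly (pcompose [:0, 0, of_nat a:] [:-r, 1:]) x = poly [:of_nat b, of_nat c, of_nat a:] x" for x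
    proof -
      have "of_nat a * (x - r)^2 = of_nat b + x * (of_nat c + x * of_nat a)"
        using Apos d unfolding r by (simp add: field_simps power2_eq_square)
      then show ?thesis by (simp add: poly_pcompose power2_eq_square algebra_simps)
    qed
    then show ?thesis using poly_eq_poly_eq_iff by blast
  qed
  have h2: "pcompose [:lam, of_nat al:] [:-r, 1:] = [:of_nat ga, of_nat al:]"
  proof -
    have "poly (pcompose [:lam, of_nat al:] [:-r, 1:]) x = poly [:of_nat ga, of_nat al:] x" for x
      unfolding lam by (simp add: poly_pcompose algebra_simps)
    then show ?thesis using poly_eq_poly_eq_iff by blast
  qed
  show ?case
    by (simp only: pc.simps pw.simps Suc.IH pcompose_add pcompose_mult pderiv_pcompose pderiv_lin mult_1_right h1 h2)
qed


lemma poly_sum_le: fixes p :: "complex poly" assumes "degree p \<le> n" shows "poly p x = (\<Sum>k\<le>n. coeff p k * x ^ k)"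
  unfolding poly_altdef
  by (rule sum.mono_neutral_left) (use assms in \<open>auto simp: coeff_eq_0\<close>)

lemma degree_pw: "degree (pw a b c al ga n) \<le> n"
  by (rule degree_le) (auto simp: coeff_pw wnk_zero)

lemma degree_pc: "a > 0 \<Longrightarrow> degree (pc a al lam n) \<le> n"
  by (rule degree_le) (auto simp: coeff_pc binomial_eq_0)

lemma Ppoly_closed:
  assumes Apos: "a > 0" and disc: "c ^ 2 = 4 * a * b"
    and r: "r = - of_nat c / (2 * of_nat a)" and lam: "lam = of_nat al * r + of_nat ga"
  shows "Ppoly a b c al b ga n x = (\<Sum>m\<le>n. of_nat (n choose m) * lam ^ (n - m) * qq a al m * (x - r) ^ m)"
proof -
  have "Ppoly a b c al b ga n x = poly (pw a b c al ga n) x"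
    unfolding Ppoly_def by (simp add: poly_sum_le[OF degree_pw] coeff_pw)
  also have "\<dots> = poly (pc a al lam n) (x - r)"
    using pw_pc[OF Apos disc r lam] by (simp add: poly_pcompose)
  also have "\<dots> = (\<Sum>m\<le>n. of_nat (n choose m) * lam ^ (n - m) * qq a al m * (x - r) ^ m)"
    by (simp add: poly_sum_le[OF degree_pc[OF Apos]] coeff_pc[OF Apos])
  finally show ?thesis .
qed

lemma term_eq:
  fixes s t u lam :: complex
  assumes "i \<le> k" and Apos: "a > 0" and s: "s = of_nat al / of_nat a"
  shows "((- s) gchoose i) * (- (of_nat a * t * u)) ^ i * ((lam * t) ^ (k - i) /\<^sub>R fact (k - i))
     = of_nat (k choose i) * lam ^ (k - i) * qq a al i * u ^ i * t ^ k / fact k"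
proof -
  have tk: "t ^ k = t ^ i * t ^ (k - i)" using assms(1) by (simp add: power_add[symmetric])
  have g: "((- s) gchoose i) * (- (of_nat a * t * u)) ^ i = qq a al i * u ^ i * t ^ i / fact i"
    unfolding gbinomial_pochhammer qq_def s
    by (simp add: power_minus' power_mult_distrib field_simps)
  show ?thesis
    unfolding g binomial_fact[OF assms(1)] tk
    by (simp add: scaleR_conv_of_real field_simps power_mult_distrib)
qed


theorem mainTheorem8:
  fixes a b c al0 be0 ga0 :: nat and x :: complex
  assumes balanced: "be0 = b"
    and Apos: "a > 0"
    and disc: "c ^ 2 = 4 * a * b"
  defines "r \<equiv> - of_nat c / (2 * of_nat a) :: complex"
  shows "\<exists>\<epsilon>>0. \<forall>t::complex. norm t < \<epsilon> \<longrightarrow>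
           ((\<lambda>n. Ppoly a b c al0 be0 ga0 n x * t ^ n / fact n) sums
             (exp ((of_nat al0 * r + of_nat ga0) * t)
              * (1 - of_nat a * t * (x - r)) powr (- (of_nat al0 / of_nat a))))"
proof -
  define lam where "lam = of_nat al0 * r + (of_nat ga0 :: complex)"
  define s where "s = (of_nat al0 / of_nat a :: complex)"
  define u where "u = x - r"
  define \<epsilon> where "\<epsilon> = 1 / (of_nat a * norm u + 1)"
  have epos: "\<epsilon> > 0" unfolding \<epsilon>_def by (simp add: add_nonneg_pos)
  show ?thesis
  proof (intro exI[of _ \<epsilon>] conjI allI impI epos)
    fix t :: complex
    assume t: "norm t < \<epsilon>"
    define z where "z = of_nat a * t * u"
    have nz: "norm z < 1"
    proof -
      have "norm z = of_nat a * norm u * norm t" unfolding z_def by (simp add: norm_mult)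
      also have "\<dots> \<le> (of_nat a * norm u) * \<epsilon>"
        using t by (intro mult_left_mono) auto
      also have "\<dots> < 1"
      proof -
        have "0 \<le> real a * norm u" by simp
        then show ?thesis unfolding \<epsilon>_def by (simp add: divide_less_eq not_less)
      qed
      finally show ?thesis .
    qed
    define B where "B i = ((- s) gchoose i) * (- z) ^ i" for i
    define A where "A i = (lam * t) ^ i /\<^sub>R fact i" for i
    have Bs: "B sums (1 - z) powr (- s)"
      using gen_binomial_complex[of "- z" "- s"] nz unfolding B_def by simp
    have Bn: "summable (\<lambda>i. norm (B i))"
    proof -
      have "ereal (norm (- z)) < conv_radius ((gchoose) (- s))"
        using nz by (simp add: conv_radius_gchoose one_ereal_def)
      from abs_summable_in_conv_radius[OF this] show ?thesis unfolding B_def .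
    qed
    have As: "A sums exp (lam * t)" unfolding A_def by (rule exp_converges)
    have An: "summable (\<lambda>i. norm (A i))" unfolding A_def by (rule summable_norm_exp)
    have C: "(\<lambda>k. \<Sum>i\<le>k. B i * A (k - i)) sums ((1 - z) powr (- s) * exp (lam * t))"
      using Cauchy_product_sums[OF Bn An] Bs As by (simp add: sums_iff)
    have eq: "Ppoly a b c al0 be0 ga0 k x * t ^ k / fact k = (\<Sum>i\<le>k. B i * A (k - i))" for k
    proof -
      have "Ppoly a b c al0 be0 ga0 k x * t ^ k / fact k
         = (\<Sum>m\<le>k. of_nat (k choose m) * lam ^ (k - m) * qq a al0 m * u ^ m * t ^ k / fact k)"
        unfolding balanced Ppoly_closed[OF Apos disc r_def[THEN meta_eq_to_obj_eq] lam_def] u_def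
        by (simp add: sum_distrib_right sum_divide_distrib)
      also have "\<dots> = (\<Sum>i\<le>k. B i * A (k - i))"
        unfolding B_def A_def z_def
        by (rule sum.cong[OF refl], rule term_eq[symmetric, OF _ Apos s_def]) simp
      finally show ?thesis .
    qed
    show "(\<lambda>n. Ppoly a b c al0 be0 ga0 n x * t ^ n / fact n) sums
             (exp ((of_nat al0 * r + of_nat ga0) * t)
              * (1 - of_nat a * t * (x - r)) powr (- (of_nat al0 / of_nat a)))"
      unfolding eq using C unfolding lam_def z_def u_def s_def by (simp add: mult.commute)
  qed
qed

end
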